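(* Let $A_1,\dots,A_L$ be independent adjacency matrices generated by a multi-layer SBM (as in the context) satisfying $\frac{\log(L+n)}{pnL^{1/2}}\lesssim\rho\lesssim\frac{1}{pn}$, and let $\tilde A_l$ be the sparsified matrices with sampling probability $p$. Then the following hold simultaneously with probability larger than $1-O((L+n)^{-c})$ for some positive constant $c$: (i) $\max_{l,i}\tilde d_{l,i}\lesssim\log(L+n)$; (ii) $\max_i\sum_{l=1}^L\tilde d_{l,i}\lesssim Ln\rho p$; (iii) $\big\|\sum_{l=1}^L\tilde A_l^2\big\|_2\lesssim Ln\rho/p$.
   Context: Multi-layer SBM: each node $i\in[n]$ has a label $g_i\in[K]$ ($K$ fixed); for each layer $l$, $B_l=\rho B_{l,0}\in[0,1]^{K\times K}$ is symmetric with $B_{l,0}$ having nonnegative entries bounded by an absolute constant. $A_l\in\{0,1\}^{n\times n}$ is symmetric with $A_{l,ii}=0$ and $A_{l,ij}$ ($i<j$) independent $\mathrm{Bernoulli}(B_{l,g_ig_j})$. Sparsification with probability $p\in(0,1]$: for each $l$ and pair $i<j$, independently, with probability $p$ set $\tilde A_{l,ij}=A_{l,ij}/p$, otherwise $0$; $\tilde A_{l,ji}=\tilde A_{l,ij}$, $\tilde A_{l,ii}=0$. $\tilde d_{l,i}=\#\{j:\tilde A_{l,ij}=1/p\}$. $\|\cdot\|_2$ is the spectral norm; $f\lesssim g$ means $f\le cg$ for a constant $c>0$ independent of $n,L,p,\rho$. *)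

theory Defs
  imports "HOL-Probability.Probability"
begin

text \<open>An outcome
  \<omega> assigns to every layer l < L and pair i < j < n a pair of booleans
  (edge indicator A_{l,ij}, sparsification-keep indicator).\<close>

definition sbm_idx :: "nat \<Rightarrow> nat \<Rightarrow> (nat \<times> nat \<times> nat) set" where
  "sbm_idx L n = {(l, i, j). l < L \<and> i < j \<and> j < n}"

definition sbm_sparse_pmf ::
  "nat \<Rightarrow> nat \<Rightarrow> (nat \<Rightarrow> nat) \<Rightarrow> (nat \<Rightarrow> nat \<Rightarrow> nat \<Rightarrow> real) \<Rightarrow> real
   \<Rightarrow> (nat \<times> nat \<times> nat \<Rightarrow> bool \<times> bool) pmf" where
  "sbm_sparse_pmf L n g Blay p =
     Pi_pmf (sbm_idx L n) (False, False)
       (\<lambda>(l, i, j). pair_pmf (bernoulli_pmf (Blay l (g i) (g j))) (bernoulli_pmf p))"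

definition sparse_adj ::
  "real \<Rightarrow> (nat \<times> nat \<times> nat \<Rightarrow> bool \<times> bool) \<Rightarrow> nat \<Rightarrow> nat \<Rightarrow> nat \<Rightarrow> real" where
  "sparse_adj p \<omega> l i j =
     (if i = j then 0
      else (let (a, s) = \<omega> (l, min i j, max i j) in
            if s then (if a then 1 / p else 0) else 0))"

definition sparse_deg ::
  "nat \<Rightarrow> real \<Rightarrow> (nat \<times> nat \<times> nat \<Rightarrow> bool \<times> bool) \<Rightarrow> nat \<Rightarrow> nat \<Rightarrow> nat" where
  "sparse_deg n p \<omega> l i = card {j. j < n \<and> sparse_adj p \<omega> l i j = 1 / p}"

definition spec_norm :: "nat \<Rightarrow> (nat \<Rightarrow> nat \<Rightarrow> real) \<Rightarrow> real" where
  "spec_norm n M = Sup {sqrt (\<Sum>i<n. (\<Sum>j<n. M i j * x j)\<^sup>2) | x.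
                         (\<Sum>j<n. (x j)\<^sup>2) \<le> 1}"

definition mat_mult_n :: "nat \<Rightarrow> (nat \<Rightarrow> nat \<Rightarrow> real) \<Rightarrow> (nat \<Rightarrow> nat \<Rightarrow> real) \<Rightarrow> nat \<Rightarrow> nat \<Rightarrow> real" where
  "mat_mult_n n M N = (\<lambda>i j. \<Sum>k<n. M i k * N k j)"

end

theory Submission
  imports Defs
begin

definition xv :: "bool \<times> bool \<Rightarrow> real" where
  "xv v = (if fst v \<and> snd v then 1 else 0)"

lemma xv_01: "xv v = 0 \<or> xv v = 1" by (simp add: xv_def)
lemma xv_nonneg: "0 \<le> xv v" by (simp add: xv_def)
lemma xv_le1: "xv v \<le> 1" by (simp add: xv_def)

lemma exp_le_lin: "0 \<le> (w::real) \<Longrightarrow> w \<le> 1 \<Longrightarrow> exp w \<le> 1 + 2 * w"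
  by (smt (verit, ccfv_threshold) arithmetic_simps(1) exp_bound
    mult_left_le_one_le numerals(1) power_add_numeral power_one_right)

lemma comp_mgf:
  fixes \<beta> p w Q :: real
  assumes "0 \<le> \<beta>" "\<beta> \<le> 1" "0 \<le> p" "p \<le> 1" "0 \<le> w" "w \<le> 1" "\<beta> * p \<le> Q"
  shows "(\<integral>\<^sup>+v. ennreal (exp (w * xv v)) \<partial>pair_pmf (bernoulli_pmf \<beta>) (bernoulli_pmf p))
     \<le> ennreal (exp (2 * w * Q))"
proof -
  have "(\<integral>\<^sup>+v. ennreal (exp (w * xv v)) \<partial>pair_pmf (bernoulli_pmf \<beta>) (bernoulli_pmf p))
      = ennreal (1 + \<beta> * p * (exp w - 1))"
    using assms by (simp add: nn_integral_pair_pmf' xv_def ennreal_mult'[symmetric] ennreal_plus[symmetric]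
        del: ennreal_plus) (simp add: algebra_simps)
  also have "\<dots> \<le> ennreal (exp (2 * w * Q))"
  proof (rule ennreal_leI)
    have "\<beta> * p * (exp w - 1) \<le> \<beta> * p * (2 * w)"
      using exp_le_lin[OF assms(5,6)] assms by (intro mult_left_mono) auto
    also have "\<dots> \<le> Q * (2 * w)" using assms by (intro mult_right_mono) auto
    finally have "1 + \<beta> * p * (exp w - 1) \<le> 1 + 2 * w * Q" by (simp add: mult.commute)
    also have "\<dots> \<le> exp (2 * w * Q)" by (rule exp_ge_add_one_self)
    finally show "1 + \<beta> * p * (exp w - 1) \<le> exp (2 * w * Q)" .
  qed
  finally show ?thesis .
qed

lemma prod_mono_ennreal:
  fixes f g :: "'a \<Rightarrow> ennreal"
  shows "(\<And>i. i \<in> A \<Longrightarrow> f i \<le> g i) \<Longrightarrow> prod f A \<le> prod g A"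
proof (induction A rule: infinite_finite_induct)
  case (insert x F)
  then show ?case by (simp add: mult_mono)
qed auto

lemma mgf_Pi:
  fixes Pc :: "'a \<Rightarrow> (bool \<times> bool) pmf" and w :: "'a \<Rightarrow> real"
  assumes fin: "finite I"
    and w: "\<And>s. s \<in> I \<Longrightarrow> 0 \<le> w s \<and> w s \<le> 1"
    and comp: "\<And>s u. s \<in> I \<Longrightarrow> 0 \<le> u \<Longrightarrow> u \<le> 1 \<Longrightarrow>
        (\<integral>\<^sup>+v. ennreal (exp (u * xv v)) \<partial>Pc s) \<le> ennreal (exp (2 * u * Q))"
  shows "(\<integral>\<^sup>+\<omega>. ennreal (exp (\<Sum>s\<in>I. w s * xv (\<omega> s))) \<partial>Pi_pmf I dflt Pc)
      \<le> ennreal (exp (2 * Q * (\<Sum>s\<in>I. w s)))"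
proof -
  have "(\<integral>\<^sup>+\<omega>. ennreal (exp (\<Sum>s\<in>I. w s * xv (\<omega> s))) \<partial>Pi_pmf I dflt Pc)
      = (\<integral>\<^sup>+\<omega>. (\<Prod>s\<in>I. (\<lambda>s v. ennreal (exp (w s * xv v))) s (\<omega> s)) \<partial>Pi_pmf I dflt Pc)"
    by (simp add: exp_sum[OF fin] prod_ennreal)
  also have "\<dots> = (\<Prod>s\<in>I. \<integral>\<^sup>+v. ennreal (exp (w s * xv v)) \<partial>Pc s)"
    by (rule nn_integral_prod_Pi_pmf[OF fin])
  also have "\<dots> \<le> (\<Prod>s\<in>I. ennreal (exp (2 * w s * Q)))"
    using w comp by (intro prod_mono_ennreal) auto
  also have "\<dots> = ennreal (exp (2 * Q * (\<Sum>s\<in>I. w s)))"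
  proof -
    have "2 * Q * (\<Sum>s\<in>I. w s) = (\<Sum>s\<in>I. 2 * w s * Q)"
      by (simp add: sum_distrib_left sum_distrib_right mult_ac)
    then show ?thesis by (simp add: prod_ennreal exp_sum[OF fin])
  qed
  finally show ?thesis .
qed

lemma mgf_Pi_inj:
  fixes Pc :: "'a \<Rightarrow> (bool \<times> bool) pmf" and w :: "'j \<Rightarrow> real" and \<phi> :: "'j \<Rightarrow> 'a"
  assumes fin: "finite I" and finJ: "finite J" and inj: "inj_on \<phi> J" and sub: "\<phi> ` J \<subseteq> I"
    and w: "\<And>j. j \<in> J \<Longrightarrow> 0 \<le> w j \<and> w j \<le> 1"
    and comp: "\<And>s u. s \<in> I \<Longrightarrow> 0 \<le> u \<Longrightarrow> u \<le> 1 \<Longrightarrow>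
        (\<integral>\<^sup>+v. ennreal (exp (u * xv v)) \<partial>Pc s) \<le> ennreal (exp (2 * u * Q))"
  shows "(\<integral>\<^sup>+\<omega>. ennreal (exp (\<Sum>j\<in>J. w j * xv (\<omega> (\<phi> j)))) \<partial>Pi_pmf I dflt Pc)
      \<le> ennreal (exp (2 * Q * (\<Sum>j\<in>J. w j)))"
proof -
  define w' where "w' s = (if s \<in> \<phi> ` J then w (the_inv_into J \<phi> s) else 0)" for s
  have key: "(\<Sum>s\<in>I. w' s * h s) = (\<Sum>j\<in>J. w j * h (\<phi> j))" for h :: "'a \<Rightarrow> real"
  proof -
    have "(\<Sum>s\<in>I. w' s * h s) = (\<Sum>s\<in>\<phi> ` J. w' s * h s)"
      using sub fin by (intro sum.mono_neutral_right) (auto simp: w'_def)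
    also have "\<dots> = (\<Sum>j\<in>J. w' (\<phi> j) * h (\<phi> j))"
      by (rule sum.reindex[OF inj, unfolded comp_def])
    also have "\<dots> = (\<Sum>j\<in>J. w j * h (\<phi> j))"
      using inj by (intro sum.cong) (auto simp: w'_def the_inv_into_f_f)
    finally show ?thesis .
  qed
  have "(\<integral>\<^sup>+\<omega>. ennreal (exp (\<Sum>s\<in>I. w' s * xv (\<omega> s))) \<partial>Pi_pmf I dflt Pc)
      \<le> ennreal (exp (2 * Q * (\<Sum>s\<in>I. w' s)))"
    by (rule mgf_Pi[OF fin _ comp]) (use w inj in \<open>auto simp: w'_def the_inv_into_f_f\<close>)
  moreover have "(\<Sum>s\<in>I. w' s) = (\<Sum>j\<in>J. w j)" using key[of "\<lambda>_. 1"] by simp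
  ultimately show ?thesis by (simp add: key)
qed

lemma markov_exp:
  fixes M :: "'b pmf" and X :: "'b \<Rightarrow> real"
  assumes "(\<integral>\<^sup>+\<omega>. ennreal (exp (X \<omega>)) \<partial>M) \<le> ennreal B" "0 \<le> B"
  shows "measure_pmf.prob M {\<omega>. a \<le> X \<omega>} \<le> exp (- a) * B"
proof -
  have "ennreal (measure_pmf.prob M {\<omega>. a \<le> X \<omega>}) = emeasure M {\<omega>. a \<le> X \<omega>}"
    by (simp add: measure_pmf.emeasure_eq_measure)
  also have "\<dots> = (\<integral>\<^sup>+\<omega>. indicator {\<omega>. a \<le> X \<omega>} \<omega> \<partial>M)"
    by simp
  also have "\<dots> \<le> (\<integral>\<^sup>+\<omega>. ennreal (exp (- a)) * ennreal (exp (X \<omega>)) \<partial>M)"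
  proof (intro nn_integral_mono)
    fix \<omega>
    show "indicator {\<omega>. a \<le> X \<omega>} \<omega> \<le> ennreal (exp (- a)) * ennreal (exp (X \<omega>))"
    proof (cases "a \<le> X \<omega>")
      case True
      then have "1 \<le> exp (- a) * exp (X \<omega>)" by (simp add: exp_add[symmetric])
      then show ?thesis using True by (simp add: ennreal_mult'[symmetric])
    qed simp
  qed
  also have "\<dots> = ennreal (exp (- a)) * (\<integral>\<^sup>+\<omega>. ennreal (exp (X \<omega>)) \<partial>M)"
    by (simp add: nn_integral_cmult)
  also have "\<dots> \<le> ennreal (exp (- a)) * ennreal B"
    using assms(1) by (intro mult_left_mono) auto
  also have "\<dots> = ennreal (exp (- a) * B)"
    using assms(2) by (simp add: ennreal_mult')
  finally show ?thesis using assms(2) by (simp add: ennreal_le_iff)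
qed

lemma cond_mgf:
  fixes Pc :: "'a \<Rightarrow> (bool \<times> bool) pmf" and m :: "'a \<Rightarrow> ('a \<Rightarrow> bool \<times> bool) \<Rightarrow> real"
  assumes fin: "finite I" and AI: "A \<subseteq> I"
    and loc: "\<And>s \<omega> \<omega>'. s \<in> A \<Longrightarrow> (\<forall>x\<in>I - A. \<omega> x = \<omega>' x) \<Longrightarrow> m s \<omega> = m s \<omega>'"
    and m01: "\<And>s \<omega>. s \<in> A \<Longrightarrow> 0 \<le> m s \<omega> \<and> m s \<omega> \<le> 1"
    and comp: "\<And>s u. s \<in> I \<Longrightarrow> 0 \<le> u \<Longrightarrow> u \<le> 1 \<Longrightarrow>
        (\<integral>\<^sup>+v. ennreal (exp (u * xv v)) \<partial>Pc s) \<le> ennreal (exp (2 * u * Q))"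
  shows "(\<integral>\<^sup>+\<omega>. ennreal (exp (\<Sum>s\<in>A. m s \<omega> * xv (\<omega> s))) \<partial>Pi_pmf I dflt Pc)
      \<le> (\<integral>\<^sup>+\<omega>. ennreal (exp (2 * Q * (\<Sum>s\<in>A. m s \<omega>))) \<partial>Pi_pmf I dflt Pc)"
proof -
  define B where "B = I - A"
  have finA: "finite A" using fin AI finite_subset by blast
  have finB: "finite B" using fin by (simp add: B_def)
  have IBA: "I = B \<union> A" using AI by (auto simp: B_def)
  define mg where "mg = (\<lambda>(f::'a \<Rightarrow> bool \<times> bool, g::'a \<Rightarrow> bool \<times> bool) x. if x \<in> B then f x else g x)"
  have PI: "Pi_pmf I dflt Pc = map_pmf mg (pair_pmf (Pi_pmf B dflt Pc) (Pi_pmf A dflt Pc))"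
    unfolding IBA mg_def by (rule Pi_pmf_union[OF finB finA]) (auto simp: B_def)
  have mgA: "mg (f, g) s = g s" if "s \<in> A" for f g s
    using that by (auto simp: mg_def B_def)
  have mgm: "m s (mg (f, g)) = m s f" if "s \<in> A" for f g s
    using that by (intro loc) (auto simp: mg_def B_def)
  have "(\<integral>\<^sup>+\<omega>. ennreal (exp (\<Sum>s\<in>A. m s \<omega> * xv (\<omega> s))) \<partial>Pi_pmf I dflt Pc)
     = (\<integral>\<^sup>+f. \<integral>\<^sup>+g. ennreal (exp (\<Sum>s\<in>A. m s f * xv (g s))) \<partial>Pi_pmf A dflt Pc \<partial>Pi_pmf B dflt Pc)"
    unfolding PI by (simp add: nn_integral_pair_pmf' mgA mgm cong: sum.cong)
  also have "\<dots> \<le> (\<integral>\<^sup>+f. ennreal (exp (2 * Q * (\<Sum>s\<in>A. m s f))) \<partial>Pi_pmf B dflt Pc)"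
    by (intro nn_integral_mono mgf_Pi[OF finA] m01 comp) (use AI in auto)
  also have "\<dots> = (\<integral>\<^sup>+f. \<integral>\<^sup>+g. ennreal (exp (2 * Q * (\<Sum>s\<in>A. m s f))) \<partial>Pi_pmf A dflt Pc \<partial>Pi_pmf B dflt Pc)"
    by (simp add: measure_pmf.emeasure_space_1)
  also have "\<dots> = (\<integral>\<^sup>+\<omega>. ennreal (exp (2 * Q * (\<Sum>s\<in>A. m s \<omega>))) \<partial>Pi_pmf I dflt Pc)"
    unfolding PI by (simp add: nn_integral_pair_pmf' mgm cong: sum.cong)
  finally show ?thesis .
qed

lemma weighted_cs:
  fixes a y :: "nat \<Rightarrow> real"
  shows "(\<Sum>j\<in>S. a j * y j)\<^sup>2 \<le> (\<Sum>j\<in>S. \<bar>a j\<bar>) * (\<Sum>j\<in>S. \<bar>a j\<bar> * (y j)\<^sup>2)"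
proof -
  have "(\<Sum>j\<in>S. a j * y j)\<^sup>2 = \<bar>\<Sum>j\<in>S. a j * y j\<bar>\<^sup>2" by simp
  also have "\<dots> \<le> (\<Sum>j\<in>S. \<bar>a j * y j\<bar>)\<^sup>2"
    by (intro power_mono sum_abs) auto
  also have "(\<Sum>j\<in>S. \<bar>a j * y j\<bar>) = (\<Sum>j\<in>S. sqrt \<bar>a j\<bar> * (sqrt \<bar>a j\<bar> * \<bar>y j\<bar>))"
    by (intro sum.cong) (auto simp: abs_mult real_sqrt_mult[symmetric])
  also have "(\<dots>)\<^sup>2 \<le> (\<Sum>j\<in>S. (sqrt \<bar>a j\<bar>)\<^sup>2) * (\<Sum>j\<in>S. (sqrt \<bar>a j\<bar> * \<bar>y j\<bar>)\<^sup>2)"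
    by (rule Cauchy_Schwarz_ineq_sum)
  also have "\<dots> = (\<Sum>j\<in>S. \<bar>a j\<bar>) * (\<Sum>j\<in>S. \<bar>a j\<bar> * (y j)\<^sup>2)"
    by (simp add: power_mult_distrib)
  finally show ?thesis .
qed

lemma spec_norm_le:
  fixes M :: "nat \<Rightarrow> nat \<Rightarrow> real"
  assumes sym: "\<And>i j. i < n \<Longrightarrow> j < n \<Longrightarrow> M i j = M j i"
    and row: "\<And>i. i < n \<Longrightarrow> (\<Sum>j<n. \<bar>M i j\<bar>) \<le> R" and R0: "0 \<le> R"
  shows "spec_norm n M \<le> R"
  unfolding spec_norm_def
proof (rule cSup_least)
  show "{sqrt (\<Sum>i<n. (\<Sum>j<n. M i j * x j)\<^sup>2) | x. (\<Sum>j<n. (x j)\<^sup>2) \<le> 1} \<noteq> {}"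
  proof -
    have "sqrt (\<Sum>i<n. (\<Sum>j<n. M i j * (\<lambda>_. 0) j)\<^sup>2) \<in> {sqrt (\<Sum>i<n. (\<Sum>j<n. M i j * x j)\<^sup>2) | x. (\<Sum>j<n. (x j)\<^sup>2) \<le> 1}"
      by (intro CollectI exI[of _ "\<lambda>_. 0"]) simp
    then show ?thesis by blast
  qed
next
  fix z assume "z \<in> {sqrt (\<Sum>i<n. (\<Sum>j<n. M i j * x j)\<^sup>2) | x. (\<Sum>j<n. (x j)\<^sup>2) \<le> 1}"
  then obtain x where z: "z = sqrt (\<Sum>i<n. (\<Sum>j<n. M i j * x j)\<^sup>2)" and x: "(\<Sum>j<n. (x j)\<^sup>2) \<le> 1"
    by blast
  have "(\<Sum>i<n. (\<Sum>j<n. M i j * x j)\<^sup>2) \<le> (\<Sum>i<n. R * (\<Sum>j<n. \<bar>M i j\<bar> * (x j)\<^sup>2))"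
  proof (intro sum_mono)
    fix i assume i: "i \<in> {..<n}"
    have "(\<Sum>j<n. M i j * x j)\<^sup>2 \<le> (\<Sum>j<n. \<bar>M i j\<bar>) * (\<Sum>j<n. \<bar>M i j\<bar> * (x j)\<^sup>2)"
      by (rule weighted_cs)
    also have "\<dots> \<le> R * (\<Sum>j<n. \<bar>M i j\<bar> * (x j)\<^sup>2)"
      using row i by (intro mult_right_mono sum_nonneg) auto
    finally show "(\<Sum>j<n. M i j * x j)\<^sup>2 \<le> R * (\<Sum>j<n. \<bar>M i j\<bar> * (x j)\<^sup>2)" .
  qed
  also have "\<dots> = R * (\<Sum>j<n. (x j)\<^sup>2 * (\<Sum>i<n. \<bar>M j i\<bar>))"
  proof -
    have "(\<Sum>i<n. \<Sum>j<n. \<bar>M i j\<bar> * (x j)\<^sup>2) = (\<Sum>j<n. \<Sum>i<n. \<bar>M i j\<bar> * (x j)\<^sup>2)"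
      by (rule sum.swap)
    also have "\<dots> = (\<Sum>j<n. (x j)\<^sup>2 * (\<Sum>i<n. \<bar>M j i\<bar>))"
      by (auto simp: sum_distrib_left sym mult.commute intro!: sum.cong)
    finally have "(\<Sum>i<n. \<Sum>j<n. \<bar>M i j\<bar> * (x j)\<^sup>2) = (\<Sum>j<n. (x j)\<^sup>2 * (\<Sum>i<n. \<bar>M j i\<bar>))" .
    then show ?thesis by (simp only: sum_distrib_left[symmetric])
  qed
  also have "\<dots> \<le> R * (\<Sum>j<n. (x j)\<^sup>2 * R)"
    using R0 row by (intro mult_left_mono sum_mono mult_left_mono) auto
  also have "\<dots> = R\<^sup>2 * (\<Sum>j<n. (x j)\<^sup>2)"
    by (simp add: sum_distrib_left sum_distrib_right power2_eq_square mult_ac)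
  also have "\<dots> \<le> R\<^sup>2 * 1" using x by (intro mult_left_mono) auto
  finally have le: "(\<Sum>i<n. (\<Sum>j<n. M i j * x j)\<^sup>2) \<le> R\<^sup>2" by simp
  have "z \<le> sqrt (R\<^sup>2)" unfolding z using le by (rule real_sqrt_le_mono)
  then show "z \<le> R" using R0 by simp
qed

lemma double_count:
  fixes f :: "nat \<Rightarrow> nat \<Rightarrow> real"
  assumes "finite V"
  shows "(\<Sum>k\<in>V. \<Sum>j\<in>V - {k}. f (min k j) (max k j)) = 2 * (\<Sum>(a,b)\<in>Sigma V (\<lambda>a. {b\<in>V. a < b}). f a b)"
proof -
  have split: "(\<Sum>j\<in>V - {k}. f (min k j) (max k j)) = (\<Sum>j\<in>{j\<in>V. k < j}. f k j) + (\<Sum>j\<in>{j\<in>V. j < k}. f j k)" for k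
  proof -
    have "V - {k} = {j\<in>V. k < j} \<union> {j\<in>V. j < k}" by auto
    then have "(\<Sum>j\<in>V - {k}. f (min k j) (max k j)) = (\<Sum>j\<in>{j\<in>V. k < j} \<union> {j\<in>V. j < k}. f (min k j) (max k j))"
      by simp
    also have "\<dots> = (\<Sum>j\<in>{j\<in>V. k < j}. f (min k j) (max k j)) + (\<Sum>j\<in>{j\<in>V. j < k}. f (min k j) (max k j))"
      by (rule sum.union_disjoint) (use assms in auto)
    also have "\<dots> = (\<Sum>j\<in>{j\<in>V. k < j}. f k j) + (\<Sum>j\<in>{j\<in>V. j < k}. f j k)"
      by (intro arg_cong2[where f="(+)"] sum.cong) auto
    finally show ?thesis .
  qed
  have sw: "(\<Sum>k\<in>V. \<Sum>j\<in>{j\<in>V. j < k}. f j k) = (\<Sum>j\<in>V. \<Sum>k\<in>{k\<in>V. j < k}. f j k)"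
    using assms by (intro sum.swap_restrict) auto
  have sg: "(\<Sum>k\<in>V. \<Sum>j\<in>{j\<in>V. k < j}. f k j) = (\<Sum>(a,b)\<in>Sigma V (\<lambda>a. {b\<in>V. a < b}). f a b)"
    using assms by (intro sum.Sigma) auto
  show ?thesis using split sw sg assms by (simp add: sum.distrib)
qed

locale sbm_setup =
  fixes K :: nat and b c1 c2 :: real and n L :: nat and p \<rho> :: real
    and g :: "nat \<Rightarrow> nat" and B0 :: "nat \<Rightarrow> nat \<Rightarrow> nat \<Rightarrow> real"
  assumes b: "b > 0" and c1: "c1 > 0" and c2: "c2 > 0" and n1: "n \<ge> 1" and L1: "L \<ge> 1"
    and p0: "0 < p" and p1: "p \<le> 1" and rho0: "0 < \<rho>"
    and gK: "\<forall>i<n. g i < K"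
    and B0: "\<forall>l<L. \<forall>k<K. \<forall>k'<K. B0 l k k' = B0 l k' k \<and> 0 \<le> B0 l k k' \<and> B0 l k k' \<le> b
                          \<and> \<rho> * B0 l k k' \<le> 1"
    and low: "c1 * ln (real (L + n)) / (p * real n * sqrt (real L)) \<le> \<rho>"
    and up: "\<rho> \<le> c2 / (p * real n)"
begin

definition "I = sbm_idx L n"
definition "Pc = (\<lambda>(l, i, j). pair_pmf (bernoulli_pmf (\<rho> * B0 l (g i) (g j))) (bernoulli_pmf p))"
definition "Q = b * \<rho> * p"
definition ed :: "nat \<Rightarrow> nat \<Rightarrow> nat \<Rightarrow> nat \<times> nat \<times> nat" where "ed l i j = (l, min i j, max i j)"
definition V :: "nat \<Rightarrow> nat set" where "V i = {..<n} - {i}"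
definition "deg l i \<omega> = (\<Sum>j\<in>V i. xv (\<omega> (ed l i j)))"
definition "ll = ln (real (L + n))"
definition "M = real L * real n * \<rho> * p"

lemma P_eq: "sbm_sparse_pmf L n g (\<lambda>l k k'. \<rho> * B0 l k k') p = Pi_pmf I (False, False) Pc"
  by (simp add: sbm_sparse_pmf_def I_def Pc_def)

lemma fin_I: "finite I"
proof -
  have "I \<subseteq> {..<L} \<times> {..<n} \<times> {..<n}" by (auto simp: I_def sbm_idx_def)
  then show ?thesis by (rule finite_subset) auto
qed

lemma card_I: "real (card I) \<le> real L * real n * real n"
proof -
  have "I \<subseteq> {..<L} \<times> {..<n} \<times> {..<n}" by (auto simp: I_def sbm_idx_def)
  then have "card I \<le> card ({..<L} \<times> {..<n} \<times> {..<n})" by (intro card_mono) auto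
  then have "card I \<le> L * n * n" by (simp add: card_cartesian_product mult.assoc)
  then have "real (card I) \<le> real (L * n * n)" by (simp only: of_nat_le_iff)
  then show ?thesis by simp
qed

lemma ed_in_I: "l < L \<Longrightarrow> i < n \<Longrightarrow> j < n \<Longrightarrow> i \<noteq> j \<Longrightarrow> ed l i j \<in> I"
  by (auto simp: ed_def I_def sbm_idx_def min_def max_def)

lemma ed_sym: "ed l i j = ed l j i"
  by (auto simp: ed_def min_def max_def)

lemma ed_inj: "inj_on (ed l i) X"
  by (auto simp: inj_on_def ed_def min_def max_def split: if_splits; arith)

lemma comp_ok:
  assumes "s \<in> I" "0 \<le> u" "u \<le> 1"
  shows "(\<integral>\<^sup>+v. ennreal (exp (u * xv v)) \<partial>Pc s) \<le> ennreal (exp (2 * u * Q))"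
proof -
  obtain l i j where s: "s = (l, i, j)" and l: "l < L" and ij: "i < j" and j: "j < n"
    using assms(1) by (auto simp: I_def sbm_idx_def)
  have gi: "g i < K" and gj: "g j < K" using gK ij j by auto
  have B: "0 \<le> B0 l (g i) (g j)" "B0 l (g i) (g j) \<le> b" "\<rho> * B0 l (g i) (g j) \<le> 1"
    using B0 l gi gj by auto
  have "\<rho> * B0 l (g i) (g j) * p \<le> Q"
    unfolding Q_def using B rho0 p0 by (intro mult_right_mono) auto
  moreover have "Pc s = pair_pmf (bernoulli_pmf (\<rho> * B0 l (g i) (g j))) (bernoulli_pmf p)"
    by (simp add: s Pc_def)
  ultimately show ?thesis
    using B rho0 p0 p1 assms by (simp only:) (intro comp_mgf, auto)
qed

lemma sparse_adj_eq:
  "sparse_adj p \<omega> l i j = (if i = j then 0 else xv (\<omega> (ed l i j)) / p)"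
  by (auto simp: sparse_adj_def xv_def ed_def split: prod.splits)

lemma deg_eq: "real (sparse_deg n p \<omega> l i) = deg l i \<omega>"
proof -
  have "{j. j < n \<and> sparse_adj p \<omega> l i j = 1 / p} = V i \<inter> {j. xv (\<omega> (ed l i j)) = 1}"
    using p0 by (auto simp: sparse_adj_eq V_def xv_def)
  moreover have "deg l i \<omega> = (\<Sum>j\<in>V i. of_bool (xv (\<omega> (ed l i j)) = 1))"
    unfolding deg_def by (intro sum.cong) (auto simp: xv_def)
  ultimately show ?thesis by (simp add: sparse_deg_def V_def)
qed

lemma ll_pos: "ll > 0"
  using n1 L1 by (simp add: ll_def)

lemma nQ: "real n * Q \<le> b * c2"
proof -
  have "\<rho> * (p * real n) \<le> c2" using up p0 n1 by (simp add: field_simps)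
  then show ?thesis unfolding Q_def using b by (simp add: mult_ac mult_left_mono)
qed

lemma QLn: "Q * real L * real n = b * M"
  by (simp add: Q_def M_def mult_ac)

lemma M_low: "M \<ge> c1 * ll * sqrt (real L)"
proof -
  have pos: "p * real n * sqrt (real L) > 0" using p0 n1 L1 by simp
  have "c1 * ll \<le> \<rho> * (p * real n * sqrt (real L))" using low pos by (simp add: ll_def field_simps)
  then have "c1 * ll * sqrt (real L) \<le> \<rho> * (p * real n * sqrt (real L)) * sqrt (real L)"
    by (intro mult_right_mono) auto
  also have "\<dots> = M" using L1 by (simp add: M_def mult_ac)
  finally show ?thesis .
qed

lemma sqrtL: "c1 * ll \<le> c2 * sqrt (real L)"
proof -
  have pos: "p * real n * sqrt (real L) > 0" using p0 n1 L1 by simp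
  have "c1 * ll / (p * real n * sqrt (real L)) \<le> c2 / (p * real n)" using low up by (simp add: ll_def)
  then have "c1 * ll \<le> c2 / (p * real n) * (p * real n * sqrt (real L))" using pos by (simp add: field_simps)
  also have "\<dots> = c2 * sqrt (real L)" using p0 n1 by (simp add: field_simps)
  finally show ?thesis .
qed

lemma M_low2: "M \<ge> c1 * c1 * ll * ll / c2"
proof -
  have "c1 * ll \<le> c2 * sqrt (real L)" by (rule sqrtL)
  then have "c1 * ll * (c1 * ll) \<le> c2 * sqrt (real L) * (c1 * ll)"
    using c1 ll_pos by (intro mult_right_mono) auto
  also have "\<dots> \<le> c2 * M" using M_low c2 by (simp add: mult_ac)
  finally show ?thesis using c2 by (simp add: field_simps)
qed

lemma M_low1: "M \<ge> c1 * ll"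
proof -
  have "c1 * ll * 1 \<le> c1 * ll * sqrt (real L)" using c1 ll_pos L1 by (intro mult_left_mono) auto
  then show ?thesis using M_low by simp
qed

abbreviation "PP \<equiv> Pi_pmf I (False, False) Pc"

lemma finV: "finite (V i)" by (simp add: V_def)

lemma card_V: "card (V i) \<le> n"
  unfolding V_def by (metis card_Diff_subset card_lessThan diff_le_self finite.emptyI finite_insert insert_subset subset_refl card_mono finite_lessThan Diff_subset)

lemma bad1:
  assumes l: "l < L" and i: "i < n"
  shows "measure_pmf.prob PP {\<omega>. a \<le> deg l i \<omega>} \<le> exp (- a / 2 + b * c2)"
proof -
  have mgf: "(\<integral>\<^sup>+\<omega>. ennreal (exp (\<Sum>j\<in>V i. 1/2 * xv (\<omega> (ed l i j)))) \<partial>PP)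
      \<le> ennreal (exp (2 * Q * (\<Sum>j\<in>V i. 1/2)))"
    by (rule mgf_Pi_inj[OF fin_I finV ed_inj _ _ comp_ok])
       (use l i in \<open>auto simp: V_def intro!: ed_in_I\<close>)
  have h: "(\<Sum>j\<in>V i. 1/2 * xv (\<omega> (ed l i j))) = deg l i \<omega> / 2" for \<omega>
    by (simp add: deg_def sum_divide_distrib[symmetric])
  have eq: "{\<omega>. a \<le> deg l i \<omega>} = {\<omega>. a / 2 \<le> (\<Sum>j\<in>V i. 1/2 * xv (\<omega> (ed l i j)))}"
    unfolding h by auto
  have "measure_pmf.prob PP {\<omega>. a \<le> deg l i \<omega>} \<le> exp (- (a / 2)) * exp (2 * Q * (\<Sum>j\<in>V i. 1/2))"
    unfolding eq by (rule markov_exp[OF mgf]) simp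
  also have "\<dots> = exp (- a / 2 + Q * real (card (V i)))" by (simp add: exp_add[symmetric])
  also have "\<dots> \<le> exp (- a / 2 + b * c2)"
  proof -
    have "Q * real (card (V i)) \<le> Q * real n"
      using card_V Q_def b rho0 p0 by (intro mult_left_mono) auto
    then show ?thesis using nQ by (simp add: mult.commute)
  qed
  finally show ?thesis .
qed

lemma bad2:
  assumes i: "i < n"
  shows "measure_pmf.prob PP {\<omega>. a \<le> (\<Sum>l<L. deg l i \<omega>)} \<le> exp (- a / 2 + b * M)"
proof -
  define J where "J = {..<L} \<times> V i"
  define \<phi> where "\<phi> = (\<lambda>(l, j). ed l i j)"
  have finJ: "finite J" by (simp add: J_def finV)
  have inj: "inj_on \<phi> J"
    by (auto simp: inj_on_def \<phi>_def ed_def min_def max_def split: if_splits; arith)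
  have mgf: "(\<integral>\<^sup>+\<omega>. ennreal (exp (\<Sum>x\<in>J. 1/2 * xv (\<omega> (\<phi> x)))) \<partial>PP)
      \<le> ennreal (exp (2 * Q * (\<Sum>x\<in>J. 1/2)))"
    by (rule mgf_Pi_inj[OF fin_I finJ inj _ _ comp_ok])
       (use i in \<open>auto simp: V_def J_def \<phi>_def intro!: ed_in_I\<close>)
  have sumeq: "(\<Sum>l<L. deg l i \<omega>) = (\<Sum>x\<in>J. xv (\<omega> (\<phi> x)))" for \<omega>
    unfolding deg_def J_def \<phi>_def by (simp add: sum.cartesian_product case_prod_beta)
  have h: "(\<Sum>x\<in>J. 1/2 * xv (\<omega> (\<phi> x))) = (\<Sum>l<L. deg l i \<omega>) / 2" for \<omega>
    by (simp add: sumeq sum_divide_distrib[symmetric])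
  have eq: "{\<omega>. a \<le> (\<Sum>l<L. deg l i \<omega>)} = {\<omega>. a / 2 \<le> (\<Sum>x\<in>J. 1/2 * xv (\<omega> (\<phi> x)))}"
    unfolding h by auto
  have "measure_pmf.prob PP {\<omega>. a \<le> (\<Sum>l<L. deg l i \<omega>)} \<le> exp (- (a / 2)) * exp (2 * Q * (\<Sum>x\<in>J. 1/2))"
    unfolding eq by (rule markov_exp[OF mgf]) simp
  also have "\<dots> = exp (- a / 2 + Q * real (card J))" by (simp add: exp_add[symmetric])
  also have "\<dots> \<le> exp (- a / 2 + b * M)"
  proof -
    have "card J \<le> L * n" using card_V by (simp add: J_def card_cartesian_product)
    then have "real (card J) \<le> real L * real n" by (metis of_nat_le_iff of_nat_mult)
    then have "Q * real (card J) \<le> Q * (real L * real n)"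
      using Q_def b rho0 p0 by (intro mult_left_mono) auto
    then show ?thesis using QLn by (simp add: mult_ac)
  qed
  finally show ?thesis .
qed

definition "Ai i = {s\<in>I. fst (snd s) = i \<or> snd (snd s) = i}"
definition "oth i s = (if fst (snd s) = i then snd (snd s) else fst (snd s))"
definition "D i l k \<omega> = (\<Sum>j\<in>V i - {k}. xv (\<omega> (ed l k j)))"
definition "W i T \<omega> = (\<Sum>l<L. \<Sum>k\<in>V i. xv (\<omega> (ed l i k)) * min (D i l k \<omega>) T)"

lemma bij_A:
  assumes i: "i < n"
  shows "bij_betw (\<lambda>(l, k). ed l i k) ({..<L} \<times> V i) (Ai i)"
proof (rule bij_betw_imageI)
  show "inj_on (\<lambda>(l, k). ed l i k) ({..<L} \<times> V i)"
    by (auto simp: inj_on_def ed_def min_def max_def split: if_splits; arith)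
  show "(\<lambda>(l, k). ed l i k) ` ({..<L} \<times> V i) = Ai i"
  proof
    show "(\<lambda>(l, k). ed l i k) ` ({..<L} \<times> V i) \<subseteq> Ai i"
      using i by (auto simp: Ai_def V_def ed_in_I) (auto simp: ed_def min_def max_def split: if_splits)
  next
    show "Ai i \<subseteq> (\<lambda>(l, k). ed l i k) ` ({..<L} \<times> V i)"
    proof
      fix s assume s: "s \<in> Ai i"
      then obtain l a c where s': "s = (l, a, c)" "l < L" "a < c" "c < n" "a = i \<or> c = i"
        by (auto simp: Ai_def I_def sbm_idx_def)
      show "s \<in> (\<lambda>(l, k). ed l i k) ` ({..<L} \<times> V i)"
      proof (cases "a = i")
        case True
        then have "s = (\<lambda>(l, k). ed l i k) (l, c)" using s' by (auto simp: ed_def)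
        moreover have "(l, c) \<in> {..<L} \<times> V i" using s' True by (auto simp: V_def)
        ultimately show ?thesis by blast
      next
        case False
        then have "s = (\<lambda>(l, k). ed l i k) (l, a)" using s' by (auto simp: ed_def)
        moreover have "(l, a) \<in> {..<L} \<times> V i" using s' False by (auto simp: V_def)
        ultimately show ?thesis by blast
      qed
    qed
  qed
qed

lemma oth_ed: "k \<noteq> i \<Longrightarrow> oth i (ed l i k) = k"
  by (auto simp: oth_def ed_def min_def max_def)

lemma D_nonneg: "0 \<le> D i l k \<omega>"
  by (auto simp: D_def intro!: sum_nonneg xv_nonneg)

lemma bad3:
  assumes i: "i < n" and T: "T > 0" and QT: "2 * Q \<le> T"
  shows "measure_pmf.prob PP {\<omega>. a \<le> W i T \<omega>} \<le> exp (- a / (2 * T) + 4 * Q * Q * (real L * real n * real n) / T)"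
proof -
  define t where "t = 1 / (2 * T)"
  have t0: "t > 0" using T by (simp add: t_def)
  define m where "m s \<omega> = t * min (D i (fst s) (oth i s) \<omega>) T" for s \<omega>
  have Q0: "Q \<ge> 0" using b rho0 p0 by (simp add: Q_def)
  have AI: "Ai i \<subseteq> I" by (auto simp: Ai_def)
  have finA: "finite (Ai i)" using AI fin_I finite_subset by blast
  have bij: "bij_betw (\<lambda>(l, k). ed l i k) ({..<L} \<times> V i) (Ai i)" by (rule bij_A[OF i])
  have reidx: "(\<Sum>s\<in>Ai i. h s) = (\<Sum>(l,k)\<in>{..<L} \<times> V i. h (ed l i k))" for h :: "_ \<Rightarrow> real"
    using sum.reindex_bij_betw[OF bij, of h] by (simp add: case_prod_beta)
  have mfix: "m (ed l i k) \<omega> = t * min (D i l k \<omega>) T" if "k \<in> V i" for l k \<omega>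
    using that by (simp add: m_def oth_ed V_def) (simp add: ed_def)
  have tW: "t * W i T \<omega> = (\<Sum>s\<in>Ai i. m s \<omega> * xv (\<omega> s))" for \<omega>
  proof -
    have "t * W i T \<omega> = (\<Sum>(l,k)\<in>{..<L} \<times> V i. t * (xv (\<omega> (ed l i k)) * min (D i l k \<omega>) T))"
      by (simp add: W_def sum_distrib_left sum.cartesian_product case_prod_beta)
    also have "\<dots> = (\<Sum>(l,k)\<in>{..<L} \<times> V i. m (ed l i k) \<omega> * xv (\<omega> (ed l i k)))"
      by (intro sum.cong) (auto simp: mfix)
    also have "\<dots> = (\<Sum>s\<in>Ai i. m s \<omega> * xv (\<omega> s))" by (simp add: reidx)
    finally show ?thesis .
  qed
  have condb: "(\<integral>\<^sup>+\<omega>. ennreal (exp (\<Sum>s\<in>Ai i. m s \<omega> * xv (\<omega> s))) \<partial>PP)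
      \<le> (\<integral>\<^sup>+\<omega>. ennreal (exp (2 * Q * (\<Sum>s\<in>Ai i. m s \<omega>))) \<partial>PP)"
  proof (rule cond_mgf[OF fin_I AI _ _ comp_ok])
    fix s and \<omega> \<omega>' :: "nat \<times> nat \<times> nat \<Rightarrow> bool \<times> bool"
    assume s: "s \<in> Ai i" and agree: "\<forall>x\<in>I - Ai i. \<omega> x = \<omega>' x"
    obtain l a c where s': "s = (l, a, c)" "l < L" "a < c" "c < n" "a = i \<or> c = i"
      using s by (auto simp: Ai_def I_def sbm_idx_def)
    define k where "k = oth i s"
    have k: "k \<noteq> i" "k < n" using s' by (auto simp: k_def oth_def)
    have "D i l k \<omega> = D i l k \<omega>'"
      unfolding D_def
    proof (intro sum.cong refl)
      fix j assume j: "j \<in> V i - {k}"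
      have "ed l k j \<in> I" using j k s' by (intro ed_in_I) (auto simp: V_def)
      moreover have "ed l k j \<notin> Ai i" using j k by (auto simp: Ai_def ed_def V_def min_def max_def)
      ultimately show "xv (\<omega> (ed l k j)) = xv (\<omega>' (ed l k j))" using agree by auto
    qed
    then show "m s \<omega> = m s \<omega>'" by (simp add: m_def k_def s')
  next
    fix s \<omega> assume "s \<in> Ai i"
    have "m s \<omega> \<le> t * T" unfolding m_def using t0 by (intro mult_left_mono) auto
    also have "\<dots> = 1/2" using T by (simp add: t_def)
    finally show "0 \<le> m s \<omega> \<and> m s \<omega> \<le> 1"
      unfolding m_def using t0 T D_nonneg by auto
  qed
  define Sig where "Sig = Sigma (V i) (\<lambda>a. {c\<in>V i. a < c})"
  define J where "J = {..<L} \<times> Sig"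
  define \<phi> where "\<phi> = (\<lambda>(l::nat, (a::nat, c::nat)). (l, a, c))"
  have finJ: "finite J" by (auto simp: J_def Sig_def finV)
  have injJ: "inj_on \<phi> J" by (auto simp: inj_on_def \<phi>_def)
  have subJ: "\<phi> ` J \<subseteq> I" by (auto simp: \<phi>_def J_def Sig_def V_def I_def sbm_idx_def)
  have stepc: "2 * Q * (\<Sum>s\<in>Ai i. m s \<omega>) \<le> (\<Sum>x\<in>J. (4 * Q * t) * xv (\<omega> (\<phi> x)))" for \<omega>
  proof -
    have "(\<Sum>s\<in>Ai i. m s \<omega>) = (\<Sum>(l,k)\<in>{..<L} \<times> V i. t * min (D i l k \<omega>) T)"
      by (simp add: reidx) (intro sum.cong, auto simp: mfix)
    also have "\<dots> \<le> (\<Sum>(l,k)\<in>{..<L} \<times> V i. t * D i l k \<omega>)"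
      using t0 by (intro sum_mono) (auto intro!: mult_left_mono)
    also have "\<dots> = t * (\<Sum>l<L. \<Sum>k\<in>V i. D i l k \<omega>)"
      by (simp add: sum.cartesian_product[symmetric] sum_distrib_left)
    also have "(\<Sum>l<L. \<Sum>k\<in>V i. D i l k \<omega>) = (\<Sum>l<L. 2 * (\<Sum>(a,c)\<in>Sig. xv (\<omega> (l, a, c))))"
    proof (intro sum.cong refl)
      fix l
      show "(\<Sum>k\<in>V i. D i l k \<omega>) = 2 * (\<Sum>(a,c)\<in>Sig. xv (\<omega> (l, a, c)))"
        unfolding D_def ed_def Sig_def
        by (rule double_count[OF finV, of "\<lambda>a c. xv (\<omega> (l, a, c))" i])
    qed
    also have "\<dots> = 2 * (\<Sum>x\<in>J. xv (\<omega> (\<phi> x)))"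
    proof -
      have "(\<Sum>x\<in>J. xv (\<omega> (\<phi> x))) = (\<Sum>(l, y)\<in>{..<L} \<times> Sig. xv (\<omega> (l, y)))"
        by (simp add: J_def \<phi>_def case_prod_beta)
      also have "\<dots> = (\<Sum>l<L. \<Sum>y\<in>Sig. xv (\<omega> (l, y)))"
        by (rule sum.cartesian_product[symmetric])
      finally show ?thesis by (simp add: sum_distrib_left case_prod_beta)
    qed
    finally have "(\<Sum>s\<in>Ai i. m s \<omega>) \<le> t * (2 * (\<Sum>x\<in>J. xv (\<omega> (\<phi> x))))" .
    then have "2 * Q * (\<Sum>s\<in>Ai i. m s \<omega>) \<le> 2 * Q * (t * (2 * (\<Sum>x\<in>J. xv (\<omega> (\<phi> x)))))"
      using Q0 by (intro mult_left_mono) auto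
    also have "\<dots> = (\<Sum>x\<in>J. (4 * Q * t) * xv (\<omega> (\<phi> x)))"
      by (simp add: sum_distrib_left mult_ac)
    finally show ?thesis .
  qed
  have w1: "4 * Q * t \<le> 1" using QT T by (simp add: t_def field_simps)
  have mgfd: "(\<integral>\<^sup>+\<omega>. ennreal (exp (\<Sum>x\<in>J. (4 * Q * t) * xv (\<omega> (\<phi> x)))) \<partial>PP)
      \<le> ennreal (exp (2 * Q * (\<Sum>x\<in>J. 4 * Q * t)))"
    by (rule mgf_Pi_inj[OF fin_I finJ injJ subJ _ comp_ok]) (use w1 Q0 t0 in auto)
  have cardJ: "real (card J) \<le> real L * real n * real n"
  proof -
    have "card J = card (\<phi> ` J)" using injJ by (simp add: card_image)
    also have "\<dots> \<le> card I" using subJ fin_I by (intro card_mono)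
    finally show ?thesis using card_I by linarith
  qed
  have total: "(\<integral>\<^sup>+\<omega>. ennreal (exp (t * W i T \<omega>)) \<partial>PP)
      \<le> ennreal (exp (8 * Q * Q * t * (real L * real n * real n)))"
  proof -
    have "(\<integral>\<^sup>+\<omega>. ennreal (exp (t * W i T \<omega>)) \<partial>PP)
        \<le> (\<integral>\<^sup>+\<omega>. ennreal (exp (2 * Q * (\<Sum>s\<in>Ai i. m s \<omega>))) \<partial>PP)"
      using condb by (simp add: tW)
    also have "\<dots> \<le> (\<integral>\<^sup>+\<omega>. ennreal (exp (\<Sum>x\<in>J. (4 * Q * t) * xv (\<omega> (\<phi> x)))) \<partial>PP)"
      by (intro nn_integral_mono ennreal_leI) (simp add: stepc)
    also have "\<dots> \<le> ennreal (exp (2 * Q * (\<Sum>x\<in>J. 4 * Q * t)))" by (rule mgfd)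
    also have "\<dots> \<le> ennreal (exp (8 * Q * Q * t * (real L * real n * real n)))"
    proof (intro ennreal_leI)
      have "2 * Q * (\<Sum>x\<in>J. 4 * Q * t) = 8 * Q * Q * t * real (card J)" by simp
      also have "\<dots> \<le> 8 * Q * Q * t * (real L * real n * real n)"
        using cardJ Q0 t0 by (intro mult_left_mono) auto
      finally show "exp (2 * Q * (\<Sum>x\<in>J. 4 * Q * t)) \<le> exp (8 * Q * Q * t * (real L * real n * real n))"
        by simp
    qed
    finally show ?thesis .
  qed
  have eq: "{\<omega>. a \<le> W i T \<omega>} = {\<omega>. t * a \<le> t * W i T \<omega>}"
    using t0 by auto
  have "measure_pmf.prob PP {\<omega>. a \<le> W i T \<omega>} \<le> exp (- (t * a)) * exp (8 * Q * Q * t * (real L * real n * real n))"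
    unfolding eq by (rule markov_exp[OF total]) simp
  also have "\<dots> = exp (- a / (2 * T) + 4 * Q * Q * (real L * real n * real n) / T)"
    by (simp add: exp_add[symmetric] t_def field_simps)
  finally show ?thesis .
qed

lemma sum_skip: "(\<Sum>j<n. if k = j then 0 else f j) = (\<Sum>j\<in>{..<n} - {k}. (f j :: real))"
proof -
  have "(\<Sum>j<n. if k = j then 0 else f j) = (\<Sum>j\<in>{..<n} - {k}. if k = j then 0 else f j)"
    by (intro sum.mono_neutral_right) auto
  also have "\<dots> = (\<Sum>j\<in>{..<n} - {k}. f j)" by (intro sum.cong) auto
  finally show ?thesis .
qed

lemma rowA: "(\<Sum>j<n. sparse_adj p \<omega> l k j) = deg l k \<omega> / p"
  by (simp add: sparse_adj_eq sum_skip deg_def V_def sum_divide_distrib)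

lemma deg_split:
  assumes i: "i < n" and k: "k \<in> V i"
  shows "deg l k \<omega> = xv (\<omega> (ed l i k)) + D i l k \<omega>"
proof -
  have "V k = insert i (V i - {k})" using i k by (auto simp: V_def)
  moreover have "i \<notin> V i - {k}" by (simp add: V_def)
  ultimately have "deg l k \<omega> = xv (\<omega> (ed l k i)) + D i l k \<omega>"
    unfolding deg_def D_def by (simp add: finV)
  then show ?thesis by (simp add: ed_sym)
qed

lemma D_le_deg:
  assumes "k \<in> V i" shows "D i l k \<omega> \<le> deg l k \<omega>"
  unfolding D_def deg_def using assms by (intro sum_mono2 finV) (auto simp: V_def xv_nonneg)

lemma rowsum:
  assumes i: "i < n" and degT: "\<forall>l<L. \<forall>k<n. deg l k \<omega> \<le> T"
  shows "(\<Sum>j<n. \<Sum>l<L. mat_mult_n n (sparse_adj p \<omega> l) (sparse_adj p \<omega> l) i j)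
       = ((\<Sum>l<L. deg l i \<omega>) + W i T \<omega>) / p\<^sup>2"
proof -
  have inner: "(\<Sum>j<n. mat_mult_n n (sparse_adj p \<omega> l) (sparse_adj p \<omega> l) i j)
      = (deg l i \<omega> + (\<Sum>k\<in>V i. xv (\<omega> (ed l i k)) * min (D i l k \<omega>) T)) / p\<^sup>2" if l: "l < L" for l
  proof -
    have "(\<Sum>j<n. mat_mult_n n (sparse_adj p \<omega> l) (sparse_adj p \<omega> l) i j)
        = (\<Sum>k<n. sparse_adj p \<omega> l i k * (\<Sum>j<n. sparse_adj p \<omega> l k j))"
      unfolding mat_mult_n_def by (subst sum.swap) (simp add: sum_distrib_left)
    also have "\<dots> = (\<Sum>k<n. sparse_adj p \<omega> l i k * (deg l k \<omega> / p))" by (simp add: rowA)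
    also have "\<dots> = (\<Sum>k\<in>V i. xv (\<omega> (ed l i k)) * deg l k \<omega> / p\<^sup>2)"
    proof -
      have "(\<Sum>k<n. sparse_adj p \<omega> l i k * (deg l k \<omega> / p)) = (\<Sum>k<n. if i = k then 0 else xv (\<omega> (ed l i k)) * deg l k \<omega> / p\<^sup>2)"
        by (intro sum.cong) (auto simp: sparse_adj_eq power2_eq_square)
      then show ?thesis by (simp add: sum_skip V_def)
    qed
    also have "\<dots> = (\<Sum>k\<in>V i. (xv (\<omega> (ed l i k)) + xv (\<omega> (ed l i k)) * min (D i l k \<omega>) T) / p\<^sup>2)"
    proof (intro sum.cong refl)
      fix k assume k: "k \<in> V i"
      have kn: "k < n" using k by (simp add: V_def)
      have DT: "D i l k \<omega> \<le> T" using D_le_deg[OF k, of l \<omega>] degT l kn by force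
      have xx: "xv v * xv v = xv v" for v by (simp add: xv_def)
      show "xv (\<omega> (ed l i k)) * deg l k \<omega> / p\<^sup>2 = (xv (\<omega> (ed l i k)) + xv (\<omega> (ed l i k)) * min (D i l k \<omega>) T) / p\<^sup>2"
        using DT by (simp add: deg_split[OF i k] distrib_left xx min_def)
    qed
    also have "\<dots> = (deg l i \<omega> + (\<Sum>k\<in>V i. xv (\<omega> (ed l i k)) * min (D i l k \<omega>) T)) / p\<^sup>2"
      by (simp add: deg_def sum_divide_distrib[symmetric] sum.distrib)
    finally show ?thesis .
  qed
  have "(\<Sum>j<n. \<Sum>l<L. mat_mult_n n (sparse_adj p \<omega> l) (sparse_adj p \<omega> l) i j)
      = (\<Sum>l<L. \<Sum>j<n. mat_mult_n n (sparse_adj p \<omega> l) (sparse_adj p \<omega> l) i j)"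
    by (rule sum.swap)
  also have "\<dots> = (\<Sum>l<L. (deg l i \<omega> + (\<Sum>k\<in>V i. xv (\<omega> (ed l i k)) * min (D i l k \<omega>) T)) / p\<^sup>2)"
    by (intro sum.cong refl inner) auto
  also have "\<dots> = ((\<Sum>l<L. deg l i \<omega>) + W i T \<omega>) / p\<^sup>2"
    by (simp add: W_def sum_divide_distrib[symmetric] sum.distrib)
  finally show ?thesis .
qed

lemma mat_sym: "(\<Sum>l<L. mat_mult_n n (sparse_adj p \<omega> l) (sparse_adj p \<omega> l) i j)
     = (\<Sum>l<L. mat_mult_n n (sparse_adj p \<omega> l) (sparse_adj p \<omega> l) j i)"
proof -
  have sa: "sparse_adj p \<omega> l a c = sparse_adj p \<omega> l c a" for l a c
    by (simp add: sparse_adj_eq ed_sym)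
  show ?thesis unfolding mat_mult_n_def
    by (intro sum.cong refl) (simp add: sa mult.commute)
qed

lemma mat_nonneg: "0 \<le> (\<Sum>l<L. mat_mult_n n (sparse_adj p \<omega> l) (sparse_adj p \<omega> l) i j)"
  unfolding mat_mult_n_def using p0
  by (intro sum_nonneg mult_nonneg_nonneg) (auto simp: sparse_adj_eq xv_nonneg)

end

theorem lemma1:
  fixes K :: nat and b c1 c2 :: real
  assumes "K \<ge> 1" and "b > 0" and "c1 > 0" and "c2 > 0"
  shows "\<exists>C c C'. C > 0 \<and> c > 0 \<and> C' > 0 \<and>
    (\<forall>(n::nat) (L::nat) (p::real) (\<rho>::real) (g::nat \<Rightarrow> nat) (B0::nat \<Rightarrow> nat \<Rightarrow> nat \<Rightarrow> real).
      n \<ge> 1 \<longrightarrow> L \<ge> 1 \<longrightarrow> 0 < p \<longrightarrow> p \<le> 1 \<longrightarrow> 0 < \<rho> \<longrightarrow>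
      (\<forall>i<n. g i < K) \<longrightarrow>
      (\<forall>l<L. \<forall>k<K. \<forall>k'<K. B0 l k k' = B0 l k' k \<and> 0 \<le> B0 l k k' \<and> B0 l k k' \<le> b
                          \<and> \<rho> * B0 l k k' \<le> 1) \<longrightarrow>
      c1 * ln (real (L + n)) / (p * real n * sqrt (real L)) \<le> \<rho> \<longrightarrow>
      \<rho> \<le> c2 / (p * real n) \<longrightarrow>
      measure_pmf.prob (sbm_sparse_pmf L n g (\<lambda>l k k'. \<rho> * B0 l k k') p)
        {\<omega>. (\<forall>l<L. \<forall>i<n. real (sparse_deg n p \<omega> l i) \<le> C * ln (real (L + n)))
           \<and> (\<forall>i<n. (\<Sum>l<L. real (sparse_deg n p \<omega> l i)) \<le> C * real L * real n * \<rho> * p)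
           \<and> spec_norm n (\<lambda>i j. \<Sum>l<L. mat_mult_n n (sparse_adj p \<omega> l) (sparse_adj p \<omega> l) i j)
               \<le> C * real L * real n * \<rho> / p}
        \<ge> 1 - C' * (real (L + n)) powr (- c))"
proof -
  define Cf where "Cf = 6 + 4 * b * c2 / ln 2"
  define C2 where "C2 = 2 * b + 4 / c1"
  define \<alpha> where "\<alpha> = 8 * b * b * c2 + 4 * Cf * c2 / (c1 * c1)"
  define C where "C = Cf + C2 + \<alpha>"
  have Cf6: "Cf \<ge> 6" using assms by (simp add: Cf_def)
  have C2pos: "C2 > 0" using assms by (simp add: C2_def add_pos_pos)
  have \<alpha>pos: "\<alpha> > 0" unfolding \<alpha>_def using assms Cf6
    by (intro add_pos_pos mult_pos_pos divide_pos_pos) auto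
  have Cpos: "C > 0" using Cf6 C2pos \<alpha>pos by (simp add: C_def)
  show ?thesis
  proof (rule exI[of _ C], rule exI[of _ "1::real"], rule exI[of _ "exp (b * c2) + 2"], intro conjI allI impI)
    show "C > 0" by (rule Cpos)
    show "(0::real) < 1" by simp
    show "0 < exp (b * c2) + 2" by (simp add: add_pos_pos)
    fix n L :: nat and p \<rho> :: real and g :: "nat \<Rightarrow> nat" and B0 :: "nat \<Rightarrow> nat \<Rightarrow> nat \<Rightarrow> real"
    assume n1: "n \<ge> 1" and L1: "L \<ge> 1" and p0: "0 < p" and p1: "p \<le> 1" and rho0: "0 < \<rho>"
      and gK: "\<forall>i<n. g i < K"
      and B0: "\<forall>l<L. \<forall>k<K. \<forall>k'<K. B0 l k k' = B0 l k' k \<and> 0 \<le> B0 l k k' \<and> B0 l k k' \<le> b \<and> \<rho> * B0 l k k' \<le> 1"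
      and low: "c1 * ln (real (L + n)) / (p * real n * sqrt (real L)) \<le> \<rho>"
      and up: "\<rho> \<le> c2 / (p * real n)"
    interpret S: sbm_setup K b c1 c2 n L p \<rho> g B0
      by unfold_locales (use assms n1 L1 p0 p1 rho0 gK B0 low up in auto)
    define T where "T = Cf * S.ll"
    define N where "N = real (L + n)"
    have llN: "S.ll = ln N" by (simp add: S.ll_def N_def)
    have N2: "N \<ge> 2" using n1 L1 by (simp add: N_def)
    have expll: "exp S.ll = N" using N2 by (simp add: llN)
    have ll2: "S.ll \<ge> ln 2" using N2 by (simp add: llN)
    have llpos: "S.ll > 0" by (rule S.ll_pos)
    have Q0: "S.Q \<ge> 0" using assms rho0 p0 by (simp add: S.Q_def)
    have M0: "S.M \<ge> 0" using rho0 p0 by (simp add: S.M_def)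
    define Bad1 where "Bad1 x = {\<omega>. Cf * S.ll \<le> S.deg (fst x) (snd x) \<omega>}" for x
    define Bad2 where "Bad2 i = {\<omega>. C2 * S.M \<le> (\<Sum>l<L. S.deg l i \<omega>)}" for i
    define Bad3 where "Bad3 i = {\<omega>. \<alpha> * S.M \<le> S.W i T \<omega>}" for i
    define Bad where "Bad = (\<Union>x\<in>{..<L} \<times> {..<n}. Bad1 x) \<union> (\<Union>i\<in>{..<n}. Bad2 i) \<union> (\<Union>i\<in>{..<n}. Bad3 i)"
    define Good where "Good = {\<omega>. (\<forall>l<L. \<forall>i<n. real (sparse_deg n p \<omega> l i) \<le> C * ln (real (L + n)))
           \<and> (\<forall>i<n. (\<Sum>l<L. real (sparse_deg n p \<omega> l i)) \<le> C * real L * real n * \<rho> * p)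
           \<and> spec_norm n (\<lambda>i j. \<Sum>l<L. mat_mult_n n (sparse_adj p \<omega> l) (sparse_adj p \<omega> l) i j)
               \<le> C * real L * real n * \<rho> / p}"
    have incl: "UNIV - Good \<subseteq> Bad"
    proof
      fix \<omega> assume "\<omega> \<in> UNIV - Good"
      then have nG: "\<omega> \<notin> Good" by simp
      show "\<omega> \<in> Bad"
      proof (rule ccontr)
        assume "\<omega> \<notin> Bad"
        then have h1: "\<forall>l<L. \<forall>i<n. S.deg l i \<omega> < Cf * S.ll"
          and h2: "\<forall>i<n. (\<Sum>l<L. S.deg l i \<omega>) < C2 * S.M"
          and h3: "\<forall>i<n. S.W i T \<omega> < \<alpha> * S.M"
          by (auto simp: Bad_def Bad1_def Bad2_def Bad3_def not_le)
        have g1: "\<forall>l<L. \<forall>i<n. real (sparse_deg n p \<omega> l i) \<le> C * ln (real (L + n))"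
        proof (intro allI impI)
          fix l i assume "l < L" "i < n"
          then have "S.deg l i \<omega> \<le> Cf * S.ll" using h1 by force
          also have "\<dots> \<le> C * S.ll" using llpos C2pos \<alpha>pos by (intro mult_right_mono) (auto simp: C_def)
          finally show "real (sparse_deg n p \<omega> l i) \<le> C * ln (real (L + n))"
            by (simp add: S.deg_eq S.ll_def)
        qed
        have g2: "\<forall>i<n. (\<Sum>l<L. real (sparse_deg n p \<omega> l i)) \<le> C * real L * real n * \<rho> * p"
        proof (intro allI impI)
          fix i assume "i < n"
          then have "(\<Sum>l<L. S.deg l i \<omega>) \<le> C2 * S.M" using h2 by force
          also have "\<dots> \<le> C * S.M" using M0 Cf6 \<alpha>pos by (intro mult_right_mono) (auto simp: C_def)
          finally show "(\<Sum>l<L. real (sparse_deg n p \<omega> l i)) \<le> C * real L * real n * \<rho> * p"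
            by (simp add: S.deg_eq S.M_def mult_ac)
        qed
        have g3: "spec_norm n (\<lambda>i j. \<Sum>l<L. mat_mult_n n (sparse_adj p \<omega> l) (sparse_adj p \<omega> l) i j)
               \<le> C * real L * real n * \<rho> / p"
        proof -
          have degT: "\<forall>l<L. \<forall>k<n. S.deg l k \<omega> \<le> T" using h1 by (force simp: T_def)
          have "spec_norm n (\<lambda>i j. \<Sum>l<L. mat_mult_n n (sparse_adj p \<omega> l) (sparse_adj p \<omega> l) i j)
              \<le> (C2 + \<alpha>) * S.M / p\<^sup>2"
          proof (rule spec_norm_le)
            show "\<And>i j. (\<Sum>l<L. mat_mult_n n (sparse_adj p \<omega> l) (sparse_adj p \<omega> l) i j)
                = (\<Sum>l<L. mat_mult_n n (sparse_adj p \<omega> l) (sparse_adj p \<omega> l) j i)"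
              by (rule S.mat_sym)
            show "0 \<le> (C2 + \<alpha>) * S.M / p\<^sup>2" using C2pos \<alpha>pos M0 by simp
            fix i assume i: "i < n"
            have "(\<Sum>j<n. \<bar>\<Sum>l<L. mat_mult_n n (sparse_adj p \<omega> l) (sparse_adj p \<omega> l) i j\<bar>)
                = (\<Sum>j<n. \<Sum>l<L. mat_mult_n n (sparse_adj p \<omega> l) (sparse_adj p \<omega> l) i j)"
              using S.mat_nonneg by simp
            also have "\<dots> = ((\<Sum>l<L. S.deg l i \<omega>) + S.W i T \<omega>) / p\<^sup>2"
              by (rule S.rowsum[OF i degT])
            also have "\<dots> \<le> (C2 * S.M + \<alpha> * S.M) / p\<^sup>2"
              using h2 h3 i by (intro divide_right_mono) (auto intro: add_mono less_imp_le)
            finally show "(\<Sum>j<n. \<bar>\<Sum>l<L. mat_mult_n n (sparse_adj p \<omega> l) (sparse_adj p \<omega> l) i j\<bar>)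
                \<le> (C2 + \<alpha>) * S.M / p\<^sup>2" by (simp add: distrib_right)
          qed
          also have "\<dots> \<le> C * S.M / p\<^sup>2"
            using M0 Cf6 by (intro divide_right_mono mult_right_mono) (auto simp: C_def)
          also have "\<dots> = C * real L * real n * \<rho> / p"
            using p0 by (simp add: S.M_def power2_eq_square)
          finally show ?thesis .
        qed
        from g1 g2 g3 nG show False by (simp add: Good_def)
      qed
    qed
    have final: "measure_pmf.prob (sbm_sparse_pmf L n g (\<lambda>l k k'. \<rho> * B0 l k k') p) Good
        \<ge> 1 - (exp (b * c2) + 2) * real (L + n) powr - 1"
    proof -
      let ?P = "Pi_pmf S.I (False, False) S.Pc"
      have PE: "sbm_sparse_pmf L n g (\<lambda>l k k'. \<rho> * B0 l k k') p = ?P" by (rule S.P_eq)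
      have epl: "N powr -1 = exp (- S.ll)" using N2 by (simp add: powr_def llN)
      have nN: "real n \<le> exp S.ll" using expll by (simp add: N_def)
      have e1: "measure_pmf.prob ?P (\<Union>x\<in>{..<L} \<times> {..<n}. Bad1 x) \<le> exp (b * c2) * exp (- S.ll)"
      proof -
        have "measure_pmf.prob ?P (\<Union>x\<in>{..<L} \<times> {..<n}. Bad1 x) \<le> (\<Sum>x\<in>{..<L} \<times> {..<n}. measure_pmf.prob ?P (Bad1 x))"
          by (intro measure_pmf.finite_measure_subadditive_finite) auto
        also have "\<dots> \<le> (\<Sum>x\<in>{..<L} \<times> {..<n}. exp (- (Cf * S.ll) / 2 + b * c2))"
        proof (intro sum_mono)
          fix x assume "x \<in> {..<L} \<times> {..<n}"
          then show "measure_pmf.prob ?P (Bad1 x) \<le> exp (- (Cf * S.ll) / 2 + b * c2)"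
            unfolding Bad1_def by (intro S.bad1) auto
        qed
        also have "\<dots> = real L * real n * exp (- (Cf * S.ll) / 2 + b * c2)"
          by (simp add: card_cartesian_product)
        also have "\<dots> \<le> exp S.ll * exp S.ll * exp (- (3 * S.ll) + b * c2)"
        proof (rule mult_mono)
          show "real L * real n \<le> exp S.ll * exp S.ll"
            using expll by (intro mult_mono) (auto simp: N_def)
          show "exp (- (Cf * S.ll) / 2 + b * c2) \<le> exp (- (3 * S.ll) + b * c2)"
            using Cf6 llpos by (simp add: mult_right_mono)
        qed auto
        also have "\<dots> = exp (b * c2) * exp (- S.ll)" by (simp add: exp_add[symmetric])
        finally show ?thesis .
      qed
      have e2: "measure_pmf.prob ?P (\<Union>i\<in>{..<n}. Bad2 i) \<le> exp (- S.ll)"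
      proof -
        have each: "measure_pmf.prob ?P (Bad2 i) \<le> exp (- 2 * S.ll)" if i: "i < n" for i
        proof -
          have "measure_pmf.prob ?P (Bad2 i) \<le> exp (- (C2 * S.M) / 2 + b * S.M)"
            unfolding Bad2_def by (rule S.bad2[OF i])
          also have "\<dots> \<le> exp (- 2 * S.ll)"
          proof -
            have "- (C2 * S.M) / 2 + b * S.M = - (2 / c1) * S.M" by (simp add: C2_def field_simps)
            also have "\<dots> \<le> - (2 / c1) * (c1 * S.ll)"
              using S.M_low1 assms by (intro mult_left_mono_neg) auto
            also have "\<dots> = - 2 * S.ll" using assms by simp
            finally show ?thesis by simp
          qed
          finally show ?thesis .
        qed
        have "measure_pmf.prob ?P (\<Union>i\<in>{..<n}. Bad2 i) \<le> (\<Sum>i<n. measure_pmf.prob ?P (Bad2 i))"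
          by (intro measure_pmf.finite_measure_subadditive_finite) auto
        also have "\<dots> \<le> (\<Sum>i<n. exp (- 2 * S.ll))" by (intro sum_mono each) auto
        also have "\<dots> = real n * exp (- 2 * S.ll)" by simp
        also have "\<dots> \<le> exp S.ll * exp (- 2 * S.ll)" using nN by (intro mult_right_mono) auto
        also have "\<dots> = exp (- S.ll)" by (simp add: exp_add[symmetric])
        finally show ?thesis .
      qed
      have e3: "measure_pmf.prob ?P (\<Union>i\<in>{..<n}. Bad3 i) \<le> exp (- S.ll)"
      proof -
        have Tpos: "T > 0" using Cf6 llpos by (simp add: T_def)
        have Qb: "S.Q \<le> b * c2"
        proof -
          have "S.Q \<le> real n * S.Q" using n1 Q0 by (simp add: mult_le_cancel_right1)
          then show ?thesis using S.nQ by linarith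
        qed
        have Tb: "4 * b * c2 \<le> T"
        proof -
          have "Cf \<ge> 4 * b * c2 / ln 2" using assms by (simp add: Cf_def)
          then have "Cf * S.ll \<ge> 4 * b * c2 / ln 2 * ln 2"
            using ll2 assms Cf6 by (intro mult_mono) auto
          then show ?thesis by (simp add: T_def)
        qed
        have bc: "b * c2 > 0" using assms by simp
        have QT: "2 * S.Q \<le> T" using Qb Tb bc by linarith
        have each: "measure_pmf.prob ?P (Bad3 i) \<le> exp (- 2 * S.ll)" if i: "i < n" for i
        proof -
          have "measure_pmf.prob ?P (Bad3 i) \<le> exp (- (\<alpha> * S.M) / (2 * T) + 4 * S.Q * S.Q * (real L * real n * real n) / T)"
            unfolding Bad3_def by (rule S.bad3[OF i Tpos QT])
          also have "\<dots> \<le> exp (- 2 * S.ll)"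
          proof -
            have k1: "S.Q * S.Q * (real L * real n * real n) \<le> b * c2 * (b * S.M)"
            proof -
              have "S.Q * S.Q * (real L * real n * real n) = (real n * S.Q) * (S.Q * real L * real n)"
                by (simp add: mult_ac)
              also have "\<dots> = (real n * S.Q) * (b * S.M)" by (simp add: S.QLn)
              also have "\<dots> \<le> b * c2 * (b * S.M)"
                using S.nQ M0 assms by (intro mult_right_mono) auto
              finally show ?thesis .
            qed
            have k2: "4 * Cf * S.ll * S.ll \<le> (4 * Cf * c2 / (c1 * c1)) * S.M"
            proof -
              have "(4 * Cf * c2 / (c1 * c1)) * (c1 * c1 * S.ll * S.ll / c2) \<le> (4 * Cf * c2 / (c1 * c1)) * S.M"
                using S.M_low2 Cf6 assms by (intro mult_left_mono) auto
              moreover have "(4 * Cf * c2 / (c1 * c1)) * (c1 * c1 * S.ll * S.ll / c2) = 4 * Cf * S.ll * S.ll"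
                using assms by (simp add: field_simps)
              ultimately show ?thesis by simp
            qed
            have num: "- (\<alpha> * S.M) + 8 * (S.Q * S.Q * (real L * real n * real n)) \<le> - (4 * Cf * S.ll * S.ll)"
            proof -
              have "- (\<alpha> * S.M) + 8 * (S.Q * S.Q * (real L * real n * real n)) \<le> - (\<alpha> * S.M) + 8 * (b * c2 * (b * S.M))"
                using k1 by simp
              also have "\<dots> = - ((4 * Cf * c2 / (c1 * c1)) * S.M)" by (simp add: \<alpha>_def algebra_simps)
              also have "\<dots> \<le> - (4 * Cf * S.ll * S.ll)" using k2 by simp
              finally show ?thesis .
            qed
            have "- (\<alpha> * S.M) / (2 * T) + 4 * S.Q * S.Q * (real L * real n * real n) / T
                = (- (\<alpha> * S.M) + 8 * (S.Q * S.Q * (real L * real n * real n))) / (2 * T)"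
              using Tpos by (simp add: field_simps)
            also have "\<dots> \<le> - (4 * Cf * S.ll * S.ll) / (2 * T)"
              using num Tpos by (intro divide_right_mono) auto
            also have "\<dots> = - 2 * S.ll" using Tpos Cf6 llpos by (simp add: T_def field_simps)
            finally show ?thesis by simp
          qed
          finally show ?thesis .
        qed
        have "measure_pmf.prob ?P (\<Union>i\<in>{..<n}. Bad3 i) \<le> (\<Sum>i<n. measure_pmf.prob ?P (Bad3 i))"
          by (intro measure_pmf.finite_measure_subadditive_finite) auto
        also have "\<dots> \<le> (\<Sum>i<n. exp (- 2 * S.ll))" by (intro sum_mono each) auto
        also have "\<dots> = real n * exp (- 2 * S.ll)" by simp
        also have "\<dots> \<le> exp S.ll * exp (- 2 * S.ll)" using nN by (intro mult_right_mono) auto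
        also have "\<dots> = exp (- S.ll)" by (simp add: exp_add[symmetric])
        finally show ?thesis .
      qed
      have pBad: "measure_pmf.prob ?P Bad \<le> exp (b * c2) * exp (- S.ll) + exp (- S.ll) + exp (- S.ll)"
      proof -
        have "measure_pmf.prob ?P Bad \<le> measure_pmf.prob ?P ((\<Union>x\<in>{..<L} \<times> {..<n}. Bad1 x) \<union> (\<Union>i\<in>{..<n}. Bad2 i))
            + measure_pmf.prob ?P (\<Union>i\<in>{..<n}. Bad3 i)"
          unfolding Bad_def by (rule measure_Un_le) auto
        also have "\<dots> \<le> (measure_pmf.prob ?P (\<Union>x\<in>{..<L} \<times> {..<n}. Bad1 x) + measure_pmf.prob ?P (\<Union>i\<in>{..<n}. Bad2 i))
            + measure_pmf.prob ?P (\<Union>i\<in>{..<n}. Bad3 i)"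
          by (intro add_right_mono measure_Un_le) auto
        finally show ?thesis using e1 e2 e3 by linarith
      qed
      have "measure_pmf.prob ?P (UNIV - Good) \<le> measure_pmf.prob ?P Bad"
        by (intro measure_pmf.finite_measure_mono incl) auto
      moreover have "measure_pmf.prob ?P (UNIV - Good) = 1 - measure_pmf.prob ?P Good"
        using measure_pmf.prob_compl[of Good "?P"] by simp
      ultimately have "measure_pmf.prob ?P Good \<ge> 1 - (exp (b * c2) * exp (- S.ll) + exp (- S.ll) + exp (- S.ll))"
        using pBad by linarith
      also have "exp (b * c2) * exp (- S.ll) + exp (- S.ll) + exp (- S.ll) = (exp (b * c2) + 2) * real (L + n) powr - 1"
        using epl by (simp add: N_def algebra_simps)
      finally show ?thesis unfolding PE .
    qed
    then show "measure_pmf.prob (sbm_sparse_pmf L n g (\<lambda>l k k'. \<rho> * B0 l k k') p)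
        {\<omega>. (\<forall>l<L. \<forall>i<n. real (sparse_deg n p \<omega> l i) \<le> C * ln (real (L + n)))
           \<and> (\<forall>i<n. (\<Sum>l<L. real (sparse_deg n p \<omega> l i)) \<le> C * real L * real n * \<rho> * p)
           \<and> spec_norm n (\<lambda>i j. \<Sum>l<L. mat_mult_n n (sparse_adj p \<omega> l) (sparse_adj p \<omega> l) i j)
               \<le> C * real L * real n * \<rho> / p}
        \<ge> 1 - (exp (b * c2) + 2) * (real (L + n)) powr (- 1)"
      by (simp only: Good_def)
  qed
qed

end
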